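(* Let $n\ge1$, $R>0$, $\gamma\in(0,1)$, $\beta=\frac{2}{2-\gamma}$, and let $U\in C^2((R,\infty))$, positive on $(R,\infty)$, with $U,U'$ extending continuously to $r=R$, solve $$U''+\Big(\frac{n-1}{r}+\frac r2\Big)U'-\frac\beta2U=\gamma U^{\gamma-1}\ \text{ in }(R,\infty),\qquad U(R)=U'(R)=0.$$ Then $U>0$ and $U'>0$ in $(R,\infty)$, $(U^{1/\beta})'(R)=\frac{\sqrt2}{\beta}$ (as a right derivative, i.e. $\lim_{r\downarrow R}U^{1/\beta}(r)/(r-R)=\sqrt2/\beta$), and $\lim_{r\to\infty}U(r)/r^\beta=c$ for some $c>0$. *)

theory Defs
  imports "HOL-Analysis.Analysis"
begin

end

theory Submission imports Defs "HOL-Real_Asymp.Real_Asymp" begin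
lemma barrier:
  fixes h h' :: "real \<Rightarrow> real" and a :: real
  assumes d: "\<And>x. x \<ge> a \<Longrightarrow> (h has_real_derivative h' x) (at x)"
    and ha: "h a > 0"
    and z: "\<And>x. x > a \<Longrightarrow> h x = 0 \<Longrightarrow> h' x > 0"
    and xa: "x \<ge> a"
  shows "h x > 0"
proof (rule ccontr)
  assume "\<not> h x > 0"
  hence hx: "h x \<le> 0" by simp
  have cont: "continuous_on {a..x} h"
    using d by (meson DERIV_atLeastAtMost_imp_continuous_on atLeastAtMost_iff)
  define Z where "Z = {y \<in> {a..x}. h y \<le> (\<lambda>_. 0) y}"
  have "closed Z" unfolding Z_def
    by (rule continuous_on_closed_Collect_le[OF cont]) (auto intro: continuous_intros)
  moreover have "x \<in> Z" using hx xa by (auto simp: Z_def)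
  moreover have "bdd_below Z" by (auto simp: Z_def bdd_below_def)
  ultimately have tZ: "Inf Z \<in> Z" using closed_contains_Inf by blast
  define t where "t = Inf Z"
  have below: "\<And>y. a \<le> y \<Longrightarrow> y < t \<Longrightarrow> h y > 0"
  proof -
    fix y assume "a \<le> y" "y < t"
    show "h y > 0"
    proof (rule ccontr)
      assume "\<not> h y > 0"
      hence "y \<in> Z" using \<open>a \<le> y\<close> \<open>y < t\<close> tZ by (auto simp: Z_def t_def)
      hence "t \<le> y" unfolding t_def using \<open>bdd_below Z\<close> by (simp add: cInf_lower)
      thus False using \<open>y < t\<close> by simp
    qed
  qed
  have ht: "h t \<le> 0" "a \<le> t" "t \<le> x" using tZ by (auto simp: Z_def t_def)
  have "t \<noteq> a" using ht ha by auto
  hence at: "a < t" using ht by simp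
  have "h t = 0"
  proof (rule ccontr)
    assume "h t \<noteq> 0"
    hence "h t < 0" using ht by simp
    have "continuous_on {a..t} h" using cont ht by (meson atLeastatMost_subset_iff continuous_on_subset order_refl)
    then obtain y where "a \<le> y" "y \<le> t" "h y = 0"
      using IVT2'[of h t 0 a] \<open>h t < 0\<close> ha at by force
    moreover have "y \<noteq> t" using \<open>h t < 0\<close> \<open>h y = 0\<close> by auto
    ultimately show False using below by fastforce
  qed
  hence "h' t > 0" using z at by simp
  then obtain dd where dd: "dd > 0" "\<And>e. e > 0 \<Longrightarrow> e < dd \<Longrightarrow> h (t - e) < h t"
    using DERIV_pos_inc_left[OF d[OF ht(2)]] by blast
  define e where "e = min (dd/2) ((t - a)/2)"
  have "e > 0" "e < dd" using dd at by (auto simp: e_def)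
  hence "h (t - e) < 0" using dd \<open>h t = 0\<close> by fastforce
  moreover have "e \<le> (t - a)/2" unfolding e_def by (rule min.cobounded2)
  hence "a \<le> t - e" using at by (simp add: field_simps)
  hence "h (t - e) > 0" using below[of "t - e"] \<open>e > 0\<close> by simp
  ultimately show False by simp
qed

theorem lemma6p7:
  fixes n :: nat and R \<gamma> \<beta> :: real and U U' U'' :: "real \<Rightarrow> real"
  assumes n: "n \<ge> 1"
    and R: "R > 0"
    and \<gamma>: "0 < \<gamma>" "\<gamma> < 1"
    and \<beta>: "\<beta> = 2 / (2 - \<gamma>)"
    and dU: "\<And>r. r > R \<Longrightarrow> (U has_real_derivative U' r) (at r)"
    and dU': "\<And>r. r > R \<Longrightarrow> (U' has_real_derivative U'' r) (at r)"
    and cU'': "continuous_on {R<..} U''"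
    and pos: "\<And>r. r > R \<Longrightarrow> U r > 0"
    and ode: "\<And>r. r > R \<Longrightarrow>
      U'' r + ((real n - 1) / r + r / 2) * U' r - \<beta> / 2 * U r = \<gamma> * U r powr (\<gamma> - 1)"
    and bc0: "(U \<longlongrightarrow> 0) (at_right R)"
    and bc1: "(U' \<longlongrightarrow> 0) (at_right R)"
  shows "(\<forall>r>R. U r > 0 \<and> U' r > 0)
    \<and> ((\<lambda>r. U r powr (1 / \<beta>) / (r - R)) \<longlongrightarrow> sqrt 2 / \<beta>) (at_right R)
    \<and> (\<exists>c>0. ((\<lambda>r. U r / r powr \<beta>) \<longlongrightarrow> c) at_top)"
proof -
  have \<beta>1: "1 < \<beta>" using \<gamma> by (simp add: \<beta> field_simps)
  have \<beta>2: "\<beta> < 2" using \<gamma> by (simp add: \<beta> field_simps)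
  have inv\<beta>: "1 / \<beta> = 1 - \<gamma>/2" using \<gamma> by (simp add: \<beta> field_simps)
  define a where "a = (\<lambda>r::real. (real n - 1) / r + r / 2)"
  have U''eq: "U'' r = \<gamma> * U r powr (\<gamma> - 1) + \<beta> / 2 * U r - a r * U' r" if "r > R" for r
    using ode[OF that] unfolding a_def by (simp add: algebra_simps)
  have powpos: "U r powr e > 0" if "r > R" for r e
    using pos[OF that] by simp
  have U'pos: "U' r > 0" if r: "r > R" for r
  proof -
    have "\<exists>s. R < s \<and> s < r \<and> U' s > 0"
    proof (rule ccontr)
      assume H: "\<not> (\<exists>s. R < s \<and> s < r \<and> U' s > 0)"
      define t where "t = (R + r) / 2"
      have t: "R < t" "t < r" using r by (auto simp: t_def)
      have ev: "eventually (\<lambda>s. U t \<le> U s) (at_right R)"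
      proof (rule eventually_at_rightI[of R t])
        fix s assume s: "s \<in> {R<..<t}"
        show "U t \<le> U s"
        proof (rule DERIV_nonpos_imp_nonincreasing[of s t U])
          show "s \<le> t" using s by simp
          fix x assume "s \<le> x" "x \<le> t"
          hence x: "R < x" "x < r" using s t by auto
          hence "U' x \<le> 0" using H by (meson not_less)
          thus "\<exists>y. DERIV U x :> y \<and> y \<le> 0" using dU[OF x(1)] by blast
        qed
      qed (use t in auto)
      have "U t \<le> 0"
        using tendsto_le[OF _ bc0 tendsto_const ev] by simp
      thus False using pos t by force
    qed
    then obtain s where s: "R < s" "s < r" "U' s > 0" by blast
    show ?thesis
    proof (rule barrier[of s U' U'' r])
      fix x assume "x \<ge> s" thus "(U' has_real_derivative U'' x) (at x)" using dU' s by simp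
    next
      fix x assume x: "x > s" "U' x = 0"
      hence "x > R" using s by simp
      have "0 < \<gamma> * U x powr (\<gamma> - 1)" using powpos[OF \<open>x > R\<close>] \<gamma> by simp
      moreover have "0 < \<beta> / 2 * U x" using \<beta>1 pos[OF \<open>x > R\<close>] by simp
      ultimately show "U'' x > 0" using U''eq[OF \<open>x > R\<close>] x by simp
    qed (use s in auto)
  qed

  have ev1: "eventually (\<lambda>r. U r < 1) (at_right R)"
    using order_tendstoD(2)[OF bc0] by simp
  have "((\<lambda>r. a r * U' r) \<longlongrightarrow> a R * 0) (at_right R)"
    unfolding a_def using R by (intro tendsto_intros bc1) auto
  hence ev2: "eventually (\<lambda>r. \<bar>a r * U' r\<bar> < \<gamma>) (at_right R)"
    using \<gamma> by (auto dest!: tendsto_norm[THEN order_tendstoD(2)] simp del: abs_mult)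
  have "eventually (\<lambda>r. U'' r > 0) (at_right R)"
    using ev1 ev2 eventually_at_right_less
  proof eventually_elim
    case (elim r)
    have "1 powr (\<gamma> - 1) < U r powr (\<gamma> - 1)"
      by (rule powr_less_mono2_neg) (use elim pos \<gamma> in auto)
    hence "\<gamma> < \<gamma> * U r powr (\<gamma> - 1)" using \<gamma> by simp
    moreover have "0 < \<beta> / 2 * U r" using \<beta>1 pos elim by simp
    ultimately show ?case using U''eq[of r] elim by auto
  qed
  then obtain b0 where b0: "b0 > R" "\<And>r. r > R \<Longrightarrow> r < b0 \<Longrightarrow> U'' r > 0"
    unfolding eventually_at_right_field by blast
  define b where "b = min b0 (R + 1)"
  have b: "b > R" "b \<le> R + 1" "\<And>r. r > R \<Longrightarrow> r < b \<Longrightarrow> U'' r > 0"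
    using b0 by (auto simp: b_def)
  have U'inc: "U' s < U' r" if "R < s" "s < r" "r < b" for s r
  proof (rule DERIV_pos_imp_increasing[OF that(2)])
    fix x assume "s \<le> x" "x \<le> r"
    hence "R < x" "x < b" using that by auto
    thus "\<exists>y. DERIV U' x :> y \<and> y > 0" using dU' b(3) by blast
  qed
  define A where "A = (real n - 1) / R + (R + 1) / 2"
  have aA: "0 \<le> a r" "a r \<le> A" if "R < r" "r < b" for r
  proof -
    show "0 \<le> a r" using that R n by (simp add: a_def)
    have "(real n - 1) / r \<le> (real n - 1) / R"
      using that R n by (intro divide_left_mono) auto
    moreover have "r / 2 \<le> (R + 1) / 2" using that b by simp
    ultimately show "a r \<le> A" unfolding a_def A_def by linarith
  qed
  have A0: "A \<ge> 0" using R n by (simp add: A_def)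
  define F where "F = (\<lambda>r. U' r ^ 2 / 2 - U r powr \<gamma> - \<beta> / 4 * U r ^ 2)"
  have dF: "(F has_real_derivative (- a r * U' r ^ 2)) (at r)" if "r > R" for r
  proof -
    have "(F has_real_derivative (U' r * U'' r - \<gamma> * U r powr (\<gamma> - 1) * U' r - \<beta> / 2 * U r * U' r)) (at r)"
      unfolding F_def
      by (rule derivative_eq_intros DERIV_fun_powr dU dU' refl | use that pos in simp)+
    thus ?thesis using U''eq[OF that] by (simp add: power2_eq_square algebra_simps)
  qed
  have F0: "(F \<longlongrightarrow> 0) (at_right R)"
  proof -
    have "((\<lambda>r. U r powr \<gamma>) \<longlongrightarrow> 0) (at_right R)"
      by (rule tendsto_zero_powrI[OF bc0 tendsto_const])
         (use \<gamma> in \<open>auto intro: eventually_mono[OF eventually_at_right_less[of R]] less_imp_le pos\<close>)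
    hence "(F \<longlongrightarrow> 0 ^ 2 / 2 - 0 - \<beta> / 4 * 0 ^ 2) (at_right R)"
      unfolding F_def by (intro tendsto_intros bc0 bc1) auto
    thus ?thesis by simp
  qed
  have Fbound: "\<bar>F r\<bar> \<le> A * (r - R) * U' r ^ 2" if r: "R < r" "r < b" for r
  proof -
    have ev: "eventually (\<lambda>s. \<bar>F r - F s\<bar> \<le> A * (r - R) * U' r ^ 2) (at_right R)"
    proof (rule eventually_at_rightI[of R r])
      fix s assume s: "s \<in> {R<..<r}"
      obtain z where z: "s < z" "z < r" "F r - F s = (r - s) * (- a z * U' z ^ 2)"
        using MVT2[of s r F "\<lambda>z. - a z * U' z ^ 2"] s dF by force
      have "0 < U' z" using U'pos s z by simp
      moreover have "U' z < U' r" using U'inc[of z r] s z r by simp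
      ultimately have "U' z ^ 2 \<le> U' r ^ 2" by (simp add: power_mono)
      moreover have "0 \<le> a z" "a z \<le> A" using aA[of z] s z r by auto
      ultimately have "a z * U' z ^ 2 \<le> A * U' r ^ 2" by (meson mult_mono zero_le_power2 order_trans A0)
      moreover have "0 \<le> a z * U' z ^ 2" using \<open>0 \<le> a z\<close> by simp
      ultimately have "\<bar>F r - F s\<bar> \<le> (r - s) * (A * U' r ^ 2)"
        using z s by (simp add: abs_mult mult_left_mono)
      also have "\<dots> \<le> (r - R) * (A * U' r ^ 2)"
        using s A0 by (intro mult_right_mono) auto
      finally show "\<bar>F r - F s\<bar> \<le> A * (r - R) * U' r ^ 2" by (simp add: algebra_simps)
    qed (use r in auto)
    have "((\<lambda>s. \<bar>F r - F s\<bar>) \<longlongrightarrow> \<bar>F r - 0\<bar>) (at_right R)"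
      by (intro tendsto_intros F0)
    from tendsto_le[OF _ tendsto_const this ev] show ?thesis by simp
  qed

  define q where "q = (\<lambda>r. U' r ^ 2 / U r powr \<gamma>)"
  define E where "E = (\<lambda>r. 2 + \<beta> / 2 * U r powr (2 - \<gamma>))"
  define e where "e = (\<lambda>r. 2 * A * (r - R))"
  have qE: "\<bar>q r - E r\<bar> \<le> e r * q r" if r: "R < r" "r < b" for r
  proof -
    have P: "U r powr \<gamma> > 0" using powpos r by simp
    have "U r ^ 2 = U r powr 2" using pos[of r] r by (simp add: powr_realpow)
    hence U2: "U r ^ 2 / U r powr \<gamma> = U r powr (2 - \<gamma>)" by (simp add: powr_diff)
    have "q r = 2 * F r / U r powr \<gamma> + 2 + \<beta> / 2 * (U r ^ 2 / U r powr \<gamma>)"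
      using P unfolding q_def F_def by (simp add: field_simps)
    hence "q r - E r = 2 * F r / U r powr \<gamma>" unfolding E_def U2 by simp
    hence "\<bar>q r - E r\<bar> = 2 * \<bar>F r\<bar> / U r powr \<gamma>" using P by simp
    also have "\<dots> \<le> 2 * (A * (r - R) * U' r ^ 2) / U r powr \<gamma>"
      using Fbound[OF r] P by (intro divide_right_mono) auto
    also have "\<dots> = e r * q r" unfolding e_def q_def by simp
    finally show ?thesis .
  qed
  have E2: "(E \<longlongrightarrow> 2 + \<beta> / 2 * 0) (at_right R)"
  proof -
    have "((\<lambda>r. U r powr (2 - \<gamma>)) \<longlongrightarrow> 0) (at_right R)"
      by (rule tendsto_zero_powrI[OF bc0 tendsto_const])
         (use \<gamma> in \<open>auto intro: eventually_mono[OF eventually_at_right_less[of R]] less_imp_le pos\<close>)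
    thus ?thesis unfolding E_def by (intro tendsto_intros)
  qed
  have e0: "(e \<longlongrightarrow> 2 * A * (R - R)) (at_right R)"
    unfolding e_def by (intro tendsto_intros)
  have evb: "eventually (\<lambda>r. R < r \<and> r < b) (at_right R)"
    using b(1) eventually_at_right_field by blast
  have eve: "eventually (\<lambda>r. e r < 1) (at_right R)"
    using order_tendstoD(2)[OF e0] by simp
  have q2: "(q \<longlongrightarrow> 2) (at_right R)"
  proof (rule tendsto_sandwich[of "\<lambda>r. E r / (1 + e r)" q _ "\<lambda>r. E r / (1 - e r)"])
    show "eventually (\<lambda>r. E r / (1 + e r) \<le> q r) (at_right R)"
      using evb
    proof eventually_elim
      case (elim r)
      have "0 \<le> e r" using A0 elim by (simp add: e_def)
      have "E r \<le> q r * (1 + e r)" using qE[of r] elim by (simp add: algebra_simps abs_le_iff)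
      thus ?case using \<open>0 \<le> e r\<close> by (simp add: divide_le_eq)
    qed
    show "eventually (\<lambda>r. q r \<le> E r / (1 - e r)) (at_right R)"
      using evb eve
    proof eventually_elim
      case (elim r)
      have "q r * (1 - e r) \<le> E r" using qE[of r] elim by (simp add: algebra_simps abs_le_iff)
      thus ?case using elim by (simp add: le_divide_eq)
    qed
    show "((\<lambda>r. E r / (1 + e r)) \<longlongrightarrow> 2) (at_right R)"
      using tendsto_divide[OF E2 tendsto_add[OF tendsto_const e0, of 1]] by simp
    show "((\<lambda>r. E r / (1 - e r)) \<longlongrightarrow> 2) (at_right R)"
      using tendsto_divide[OF E2 tendsto_diff[OF tendsto_const e0, of 1]] by simp
  qed
  have lim2: "((\<lambda>r. U r powr (1 / \<beta>) / (r - R)) \<longlongrightarrow> sqrt 2 / \<beta>) (at_right R)"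
  proof (rule lhopital_right[where f' = "\<lambda>r. 1 / \<beta> * U r powr (1 / \<beta> - 1) * U' r" and g' = "\<lambda>_. 1"])
    show "((\<lambda>r. U r powr (1 / \<beta>)) \<longlongrightarrow> 0) (at_right R)"
      by (rule tendsto_zero_powrI[OF bc0 tendsto_const])
         (use \<beta>1 in \<open>auto intro: eventually_mono[OF eventually_at_right_less[of R]] less_imp_le pos\<close>)
    show "((\<lambda>r. r - R) \<longlongrightarrow> 0) (at_right R)"
      by (rule tendsto_eq_intros refl | simp)+
    show "eventually (\<lambda>r. r - R \<noteq> 0) (at_right R)"
      using eventually_at_right_less[of R] by (auto elim: eventually_mono)
    show "eventually (\<lambda>r. (1::real) \<noteq> 0) (at_right R)" by simp
    show "eventually (\<lambda>r. DERIV (\<lambda>r. U r powr (1 / \<beta>)) r :> 1 / \<beta> * U r powr (1 / \<beta> - 1) * U' r) (at_right R)"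
      using eventually_at_right_less[of R]
      by eventually_elim (use DERIV_fun_powr[OF dU pos] in \<open>simp only: of_nat_1\<close>)
    show "eventually (\<lambda>r. DERIV (\<lambda>r. r - R) r :> 1) (at_right R)"
      by (rule always_eventually) (auto intro!: derivative_eq_intros)
    have ev: "eventually (\<lambda>r. 1 / \<beta> * sqrt (q r) = 1 / \<beta> * U r powr (1 / \<beta> - 1) * U' r / 1) (at_right R)"
      using eventually_at_right_less[of R]
    proof eventually_elim
      case (elim r)
      have u: "U r > 0" "U' r > 0" using pos U'pos elim by auto
      have "sqrt (q r) = U' r / sqrt (U r powr \<gamma>)" using u by (simp add: q_def real_sqrt_divide)
      also have "sqrt (U r powr \<gamma>) = U r powr (\<gamma> / 2)" using u by (simp add: powr_half_sqrt_powr)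
      also have "U' r / U r powr (\<gamma> / 2) = U r powr (1 / \<beta> - 1) * U' r"
      proof -
        have "1 / \<beta> - 1 = - (\<gamma> / 2)" using inv\<beta> by simp
        hence "U r powr (1 / \<beta> - 1) = inverse (U r powr (\<gamma> / 2))"
          by (simp only: powr_minus)
        thus ?thesis by (metis divide_inverse mult.commute)
      qed
      finally show ?case by simp
    qed
    have "((\<lambda>r. 1 / \<beta> * sqrt (q r)) \<longlongrightarrow> 1 / \<beta> * sqrt 2) (at_right R)"
      by (intro tendsto_intros q2)
    hence "((\<lambda>r. 1 / \<beta> * sqrt (q r)) \<longlongrightarrow> sqrt 2 / \<beta>) (at_right R)" by simp
    thus "filterlim (\<lambda>r. 1 / \<beta> * U r powr (1 / \<beta> - 1) * U' r / 1) (nhds (sqrt 2 / \<beta>)) (at_right R)"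
      by (rule Lim_transform_eventually[OF _ ev])
  qed

  have Umono: "U s \<le> U t" if "R < s" "s \<le> t" for s t
  proof (rule DERIV_nonneg_imp_nondecreasing[of s t U])
    fix x assume "s \<le> x" "x \<le> t"
    hence "R < x" using that by simp
    thus "\<exists>y. DERIV U x :> y \<and> y \<ge> 0" using dU U'pos by (meson less_imp_le)
  qed (use that in simp)
  have pw1: "r powr (\<beta> - 1) = r powr \<beta> / r" if "r > 0" for r
    using that by (simp add: powr_diff)
  have pw2: "r powr (\<beta> - 2) = r powr \<beta> / r ^ 2" if "r > 0" for r
    using that by (simp add: powr_diff)
  have pw3: "r powr (\<beta> - 2 - 1) = r powr \<beta> / r ^ 3" if "r > 0" for r
  proof -
    have "\<beta> - 2 - 1 = \<beta> - 3" by simp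
    thus ?thesis using that by (simp add: powr_diff)
  qed
  have pw4: "r powr (2 - \<beta>) = r ^ 2 / r powr \<beta>" if "r > 0" for r
    using that by (simp add: powr_diff)
  define r0 where "r0 = R + 1"
  have r0: "r0 > R" "r0 \<ge> 1" using R by (auto simp: r0_def)
  define W where "W = (\<lambda>r. r * U' r - \<beta> * U r)"
  define W' where "W' = (\<lambda>r. r * \<gamma> * U r powr (\<gamma> - 1) - (real n - 2 + \<beta>) * U' r - r * W r / 2)"
  have dW: "(W has_real_derivative W' r) (at r)" if r: "r > R" for r
  proof -
    have "(W has_real_derivative (U' r + r * U'' r - \<beta> * U' r)) (at r)"
      unfolding W_def by (auto intro!: derivative_eq_intros dU dU' r)
    moreover have "U' r + r * U'' r - \<beta> * U' r = W' r"
      using r R unfolding U''eq[OF r] W'_def W_def a_def by (simp add: field_simps)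
    ultimately show ?thesis by simp
  qed
  have nb: "real n - 2 + \<beta> > 0" using n \<beta>1 by simp
  define K where "K = \<gamma> * U r0 powr (\<gamma> - 1)"
  define M where "M = max (W r0) (2 * K) + 1"
  have K0: "K > 0" unfolding K_def using mult_pos_pos[OF \<gamma>(1) powpos[OF r0(1)]] .
  have M2K: "M \<ge> 2 * K + 1" by (simp add: M_def)
  have M0: "M > 0" using K0 M2K by linarith
  have Wup: "W r < M" if "r \<ge> r0" for r
  proof -
    have "M - W r > 0"
    proof (rule barrier[of r0 "\<lambda>r. M - W r" "\<lambda>r. - W' r" r])
      fix x assume "x \<ge> r0"
      thus "((\<lambda>r. M - W r) has_real_derivative - W' x) (at x)"
        using dW[of x] r0 by (auto intro!: derivative_eq_intros)
    next
      fix x assume x: "x > r0" "M - W x = 0"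
      have xR: "x > R" using x r0 by simp
      have "U x powr (\<gamma> - 1) \<le> U r0 powr (\<gamma> - 1)"
        by (rule powr_mono2') (use \<gamma> pos[OF r0(1)] Umono[OF r0(1)] x in auto)
      hence "x * \<gamma> * U x powr (\<gamma> - 1) \<le> x * K"
        unfolding K_def using \<gamma> xR R by (simp add: mult_left_mono)
      moreover have "(real n - 2 + \<beta>) * U' x > 0" using nb U'pos[OF xR] by simp
      moreover have "x * W x / 2 = x * M / 2" using x by simp
      moreover have "x * K < x * M / 2" using xR R by (simp add: M_def)
      ultimately have "W' x < 0" unfolding W'_def by linarith
      thus "- W' x > 0" by simp
    qed (use that M_def in auto)
    thus ?thesis by simp
  qed
  define C where "C = (U r0 + M / \<beta>) / r0 powr \<beta>"
  have G1: "(U r + M / \<beta>) / r powr \<beta> \<le> C" if r: "r \<ge> r0" for r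
    unfolding C_def
  proof (rule DERIV_nonpos_imp_nonincreasing[of r0 r "\<lambda>r. (U r + M / \<beta>) / r powr \<beta>"])
    fix x assume x: "r0 \<le> x" "x \<le> r"
    hence xR: "x > R" and x0: "x > 0" using r0 R by auto
    have d: "DERIV (\<lambda>r. (U r + M / \<beta>) / r powr \<beta>) x :>
       ((U' x + 0) * x powr \<beta> - (U x + M / \<beta>) * (\<beta> * x powr (\<beta> - 1))) / (x powr \<beta> * x powr \<beta>)"
      by (rule DERIV_divide DERIV_add dU[OF xR] DERIV_const has_real_derivative_powr x0 | use x0 in simp)+
    have "((U' x + 0) * x powr \<beta> - (U x + M / \<beta>) * (\<beta> * x powr (\<beta> - 1)))
        = x powr \<beta> / x * (W x - M)"
      using x0 \<beta>1 unfolding pw1[OF x0] W_def by (simp add: field_simps)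
    also have "\<dots> \<le> 0" using Wup[of x] x x0
      by (intro mult_nonneg_nonpos) auto
    finally show "\<exists>y. DERIV (\<lambda>r. (U r + M / \<beta>) / r powr \<beta>) x :> y \<and> y \<le> 0"
      using d by (intro exI[of _ "((U' x + 0) * x powr \<beta> - (U x + M / \<beta>) * (\<beta> * x powr (\<beta> - 1))) / (x powr \<beta> * x powr \<beta>)"])
        (auto intro: divide_nonpos_nonneg)
  qed (use r in simp)
  have Uup: "U r \<le> C * r powr \<beta>" if r: "r \<ge> r0" for r
  proof -
    have "r > 0" using r r0 by simp
    hence "U r + M / \<beta> \<le> C * r powr \<beta>" using G1[OF r] by (simp add: divide_le_eq)
    thus ?thesis using M0 \<beta>1 by (smt (verit) divide_pos_pos)
  qed
  have C0: "C > 0" unfolding C_def using pos[OF r0(1)] M0 \<beta>1 r0 by (intro divide_pos_pos add_pos_pos) auto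
  define B1 where "B1 = M + \<beta> * C"
  have U'up: "U' r \<le> B1 * r powr \<beta> / r" if r: "r \<ge> r0" for r
  proof -
    have r0': "r > 0" "r > R" using r r0 by auto
    have p1: "r powr \<beta> \<ge> 1" using r r0 \<beta>1 by (intro ge_one_powr_ge_zero) auto
    have "U' r = (W r + \<beta> * U r) / r" using r0' by (simp add: W_def field_simps)
    also have "\<dots> \<le> (M * r powr \<beta> + \<beta> * (C * r powr \<beta>)) / r"
    proof (intro divide_right_mono add_mono)
      show "W r \<le> M * r powr \<beta>" using Wup[OF r] M0 p1
        by (smt (verit) mult_le_cancel_left1)
      show "\<beta> * U r \<le> \<beta> * (C * r powr \<beta>)" using Uup[OF r] \<beta>1 by simp
    qed (use r0' in simp)
    also have "\<dots> = B1 * r powr \<beta> / r" by (simp add: B1_def algebra_simps)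
    finally show ?thesis .
  qed

  have B10: "B1 > 0" using M0 C0 \<beta>1 by (simp add: B1_def add_pos_pos)
  define k where "k = (real n - 2 + \<beta>) * B1"
  have k0: "k > 0" using nb B10 by (simp add: k_def)
  define Y where "Y = 8 * k / ((\<beta> + 2) * U r0) + 1"
  have Y1: "Y \<ge> 1" using k0 \<beta>1 pos[OF r0(1)] by (simp add: Y_def)
  define X where "X = Y powr (1 / (2 - \<beta>))"
  define r1 where "r1 = max (max r0 3) X"
  have r1: "r1 \<ge> r0" "r1 \<ge> 3" "r1 \<ge> X" "r1 > R" "r1 > 0" using r0 by (auto simp: r1_def)
  have X0: "X > 0" using Y1 by (simp add: X_def)
  have "Y = X powr (2 - \<beta>)" using \<beta>2 Y1 by (simp add: X_def powr_powr)
  also have "\<dots> \<le> r1 powr (2 - \<beta>)" using X0 r1 \<beta>2 by (intro powr_mono2) auto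
  finally have r1Y: "Y \<le> r1 powr (2 - \<beta>)" .
  define L where "L = (\<beta> + 2) / 2 * U r1 * r1 powr (2 - \<beta>)"
  have L0: "L > 0" using pos[OF r1(4)] \<beta>1 r1 by (simp add: L_def)
  have L4k: "4 * k \<le> L"
  proof -
    have e: "(\<beta> + 2) / 2 * U r0 * Y = 4 * k + (\<beta> + 2) / 2 * U r0"
    proof -
      have nz: "\<beta> + 2 \<noteq> 0" "U r0 \<noteq> 0" using pos[OF r0(1)] \<beta>1 by auto
      define D where "D = (\<beta> + 2) * U r0"
      have D: "D \<noteq> 0" using nz by (simp add: D_def)
      have "(\<beta> + 2) / 2 * U r0 = D / 2" by (simp add: D_def)
      moreover have "D / 2 * (8 * k / D) = 4 * k" using D by simp
      ultimately have "(\<beta> + 2) / 2 * U r0 * (8 * k / ((\<beta> + 2) * U r0)) = 4 * k"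
        unfolding D_def by simp
      thus ?thesis by (simp add: Y_def distrib_left)
    qed
    have "0 < (\<beta> + 2) / 2 * U r0" using pos[OF r0(1)] \<beta>1 by simp
    hence "4 * k \<le> (\<beta> + 2) / 2 * U r0 * Y" using e by linarith
    also have "\<dots> \<le> (\<beta> + 2) / 2 * U r1 * r1 powr (2 - \<beta>)"
      using Umono[OF r0(1) r1(1)] r1Y pos[OF r0(1)] Y1 \<beta>1
      by (intro mult_mono) auto
    finally show ?thesis by (simp add: L_def)
  qed
  have Wlow: "W r > - L * r powr \<beta> / r ^ 2" if r: "r \<ge> r1" for r
  proof -
    have "W r + L * r powr (\<beta> - 2) > 0"
    proof (rule barrier[of r1 "\<lambda>r. W r + L * r powr (\<beta> - 2)" "\<lambda>r. W' r + L * ((\<beta> - 2) * r powr (\<beta> - 2 - 1))" r])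
      fix x assume "x \<ge> r1"
      hence "x > R" "x > 0" using r1 by auto
      thus "((\<lambda>r. W r + L * r powr (\<beta> - 2)) has_real_derivative W' x + L * ((\<beta> - 2) * x powr (\<beta> - 2 - 1))) (at x)"
        by (intro DERIV_add DERIV_cmult dW has_real_derivative_powr)
    next
      have "L * r1 powr (\<beta> - 2) = (\<beta> + 2) / 2 * U r1"
        using r1 by (simp add: L_def pw2 pw4)
      moreover have "W r1 > - \<beta> * U r1" using U'pos[OF r1(4)] r1 by (simp add: W_def)
      moreover have "(\<beta> + 2) / 2 * U r1 - \<beta> * U r1 > 0" using \<beta>2 pos[OF r1(4)] by (simp add: field_simps)
      ultimately show "W r1 + L * r1 powr (\<beta> - 2) > 0" by linarith
    next
      fix x assume x: "x > r1" "W x + L * x powr (\<beta> - 2) = 0"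
      have xR: "x > R" and x0: "x > 0" and x3: "x \<ge> 3" using x r1 by auto
      define p where "p = x powr \<beta>"
      have p0: "p > 0" using x0 by (simp add: p_def)
      have Wx: "W x = - L * p / x ^ 2" using x x0 by (simp add: pw2 p_def)
      have "0 < x * \<gamma> * U x powr (\<gamma> - 1)" using x0 \<gamma> powpos[OF xR] by simp
      moreover have "(real n - 2 + \<beta>) * U' x \<le> k * p / x"
      proof -
        have "x \<ge> r0" using x r1 by simp
        from mult_left_mono[OF U'up[OF this] less_imp_le[OF nb]]
        show ?thesis unfolding k_def p_def by (simp add: mult.assoc)
      qed
      moreover have "x * W x / 2 = - (L * p / x) / 2" using x0 by (simp add: Wx power2_eq_square)
      ultimately have "W' x > - (k * p / x) + (L * p / x) / 2" unfolding W'_def by linarith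
      moreover have "k * p / x \<le> L / 4 * p / x"
        using L4k p0 x0 by (intro divide_right_mono mult_right_mono) auto
      moreover have "L * (2 - \<beta>) * p / x ^ 3 < L / 4 * p / x"
      proof -
        have "L * p / x ^ 3 * (2 - \<beta>) < L * p / x ^ 3 * (x ^ 2 / 4)"
        proof (rule mult_strict_left_mono)
          have "x ^ 2 \<ge> 3 ^ 2" using x3 by (intro power_mono) auto
          thus "2 - \<beta> < x ^ 2 / 4" using \<beta>1 by simp
        qed (use L0 p0 x0 in simp)
        also have "\<dots> = L / 4 * p / x" using x0 by (simp add: field_simps power3_eq_cube power2_eq_square)
        finally show ?thesis by (simp add: algebra_simps)
      qed
      moreover have "L * ((\<beta> - 2) * x powr (\<beta> - 2 - 1)) = - (L * (2 - \<beta>) * p / x ^ 3)"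
        using x0 unfolding pw3[OF x0] p_def by (simp add: field_simps)
      moreover have "L / 4 * p / x = (L * p / x) / 4" by simp
      ultimately have "W' x - L * (2 - \<beta>) * p / x ^ 3 > 0"
      proof -
        have gen: "\<And>w t a1 a2 a3 :: real. - a1 + a3 / 2 < w \<Longrightarrow> a1 \<le> a2 \<Longrightarrow> t < a2 \<Longrightarrow> a2 = a3 / 4 \<Longrightarrow> w - t > 0"
          by linarith
        assume h: "- (k * p / x) + L * p / x / 2 < W' x" "k * p / x \<le> L / 4 * p / x"
           "L * (2 - \<beta>) * p / x ^ 3 < L / 4 * p / x" "L / 4 * p / x = (L * p / x) / 4"
        show ?thesis by (rule gen[OF h(1,2,3,4)])
      qed
      thus "W' x + L * ((\<beta> - 2) * x powr (\<beta> - 2 - 1)) > 0"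
        using \<open>L * ((\<beta> - 2) * x powr (\<beta> - 2 - 1)) = - (L * (2 - \<beta>) * p / x ^ 3)\<close> by simp
    qed (use r in auto)
    thus ?thesis using r r1 by (simp add: pw2)
  qed

  define G2 where "G2 = (\<lambda>r. U r / r powr \<beta> - L / (2 * r ^ 2))"
  have G2mono: "G2 s \<le> G2 t" if st: "r1 \<le> s" "s \<le> t" for s t
  proof (rule DERIV_nonneg_imp_nondecreasing[of s t G2])
    fix x assume x: "s \<le> x" "x \<le> t"
    hence xR: "x > R" and x0: "x > 0" and x1: "x \<ge> r1" using r1 st by auto
    define p where "p = x powr \<beta>"
    have p0: "p > 0" using x0 by (simp add: p_def)
    have d1: "DERIV (\<lambda>r. U r / r powr \<beta>) x :> (U' x * x powr \<beta> - U x * (\<beta> * x powr (\<beta> - 1))) / (x powr \<beta> * x powr \<beta>)"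
      by (rule DERIV_divide dU[OF xR] has_real_derivative_powr x0 | use x0 in simp)+
    have d2: "DERIV (\<lambda>r. L / (2 * r ^ 2)) x :> - L / x ^ 3"
      using x0 by (auto intro!: derivative_eq_intros simp: field_simps power2_eq_square power3_eq_cube)
    have "DERIV G2 x :> (U' x * x powr \<beta> - U x * (\<beta> * x powr (\<beta> - 1))) / (x powr \<beta> * x powr \<beta>) - - L / x ^ 3"
      unfolding G2_def by (rule DERIV_diff[OF d1 d2])
    moreover have "(U' x * x powr \<beta> - U x * (\<beta> * x powr (\<beta> - 1))) / (x powr \<beta> * x powr \<beta>) - - L / x ^ 3
        = (W x + L * p / x ^ 2) / (x * p)"
      using x0 p0 unfolding pw1[OF x0] W_def p_def[symmetric] by (simp add: field_simps power2_eq_square power3_eq_cube)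
    moreover have "W x + L * p / x ^ 2 > 0" using Wlow[OF x1] by (simp add: p_def)
    ultimately show "\<exists>y. DERIV G2 x :> y \<and> y \<ge> 0" using x0 p0 by (intro exI) (auto intro!: divide_nonneg_pos)
  qed (use st in simp)
  have G2C: "G2 r \<le> C" if r: "r \<ge> r1" for r
  proof -
    have r0': "r \<ge> r0" "r > 0" using r r1 by auto
    have "U r / r powr \<beta> \<le> C" using Uup[OF r0'(1)] r0' by (simp add: divide_le_eq)
    moreover have "L / (2 * r ^ 2) \<ge> 0" using L0 by simp
    ultimately show ?thesis by (simp add: G2_def)
  qed
  define c where "c = (SUP r\<in>{r1..}. G2 r)"
  have bdd: "bdd_above (G2 ` {r1..})" using G2C by (auto intro!: bdd_aboveI)
  have G2c: "(G2 \<longlongrightarrow> c) at_top"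
  proof (rule increasing_tendsto)
    show "eventually (\<lambda>r. G2 r \<le> c) at_top"
      unfolding c_def using eventually_ge_at_top[of r1]
      by eventually_elim (rule cSUP_upper[OF _ bdd], auto)
    fix y assume "y < c"
    then obtain r' where r': "r' \<in> {r1..}" "y < G2 r'"
      unfolding c_def using less_cSUP_iff[OF _ bdd] by auto
    show "eventually (\<lambda>r. y < G2 r) at_top"
      using eventually_ge_at_top[of r']
      by eventually_elim (use r' G2mono in \<open>force\<close>)
  qed
  have G2r1: "G2 r1 > 0"
  proof -
    have "L / (2 * r1 ^ 2) = (\<beta> + 2) / 4 * (U r1 / r1 powr \<beta>)"
      using r1 unfolding L_def pw4[OF r1(5)] by (simp add: field_simps power2_eq_square)
    moreover have "U r1 / r1 powr \<beta> > 0" using pos[OF r1(4)] r1(5) by (intro divide_pos_pos) auto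
    moreover have "(\<beta> + 2) / 4 < 1" using \<beta>2 by simp
    ultimately have "(\<beta> + 2) / 4 * (U r1 / r1 powr \<beta>) < 1 * (U r1 / r1 powr \<beta>)"
      by (intro mult_strict_right_mono) auto
    thus ?thesis unfolding G2_def using \<open>L / (2 * r1 ^ 2) = _\<close> by linarith
  qed
  have c0: "c > 0"
  proof -
    have "G2 r1 \<le> c" unfolding c_def by (rule cSUP_upper[OF _ bdd]) simp
    thus ?thesis using G2r1 by simp
  qed
  have "((\<lambda>r. G2 r + L / (2 * r ^ 2)) \<longlongrightarrow> c + 0) at_top"
    by (intro tendsto_add G2c) real_asymp
  moreover have "(\<lambda>r. G2 r + L / (2 * r ^ 2)) = (\<lambda>r. U r / r powr \<beta>)"
    by (simp add: G2_def)
  ultimately have lim3: "((\<lambda>r. U r / r powr \<beta>) \<longlongrightarrow> c) at_top" by simp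
  show ?thesis using pos U'pos lim2 lim3 c0 by blast
qed

end
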